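(* There are absolute constants $C,c_1,c_2>0$ such that the following holds. Let $k\ge1$ be an integer and let $f\in\ell^2(V,w)$ be nonnegative with $\mathrm{vol}(\mathrm{supp}(f))\le\mathrm{vol}(V)/2$ and $\mathcal R(f)>0$, and set $\delta=\phi(f)^2/\mathcal R(f)$. Then at least one of the following holds: (i) $\phi(f)\le Ck\,\mathcal R(f)$; (ii) there exist $k$ disjointly supported nonzero functions $f_1,\dots,f_k\in\ell^2(V,w)$ such that for all $i$, $\mathrm{supp}(f_i)\subseteq\mathrm{supp}(f)$ and $\mathcal R(f_i)\le Ck^2\,\mathcal R(f)/\delta$; moreover, for each $i$ there are reals $0<a_i<b_i$ with $c_1a_i/k\le b_i-a_i\le c_2a_i/k$ such that $\mathrm{supp}(f_i)\subseteq\{v: a_i\le f(v)\le b_i\}$.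
   Context: $G=(V,E,w)$ finite undirected, positive edge weights, $w(v)=\sum_{u\sim v}w(u,v)\ge1$, $\mathrm{vol}(S)=\sum_{v\in S}w(v)$, $\mathrm{supp}(f)=\{v:f(v)\ne0\}$. $\|f\|_w^2=\sum_vw(v)f(v)^2$, $\mathcal R(f)=\sum_{\{u,v\}\in E}w(u,v)(f(u)-f(v))^2/\|f\|_w^2$. Conductance $\phi(S)=w(E(S,\overline S))/\min\{\mathrm{vol}(S),\mathrm{vol}(\overline S)\}$; $V_f(t)=\{v:f(v)\ge t\}$; $\phi(f)=\min\{\phi(V_f(t)):\emptyset\ne V_f(t)\ne V\}$. Functions are disjointly supported if their supports are pairwise disjoint. *)

theory Defs
  imports Complex_Main
begin

text \<open>A weighted finite undirected graph is given by a finite vertex set V and a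
  symmetric nonnegative weight function W; {u,v} is an edge iff W u v > 0.
  Vertices are natural numbers (so that constants can be absolute over all graphs).\<close>

definition wgraph :: "nat set \<Rightarrow> (nat \<Rightarrow> nat \<Rightarrow> real) \<Rightarrow> bool" where
  "wgraph V W \<longleftrightarrow> finite V \<and> (\<forall>u\<in>V. \<forall>v\<in>V. W u v = W v u \<and> W u v \<ge> 0)
     \<and> (\<forall>v\<in>V. (\<Sum>u\<in>V. W v u) \<ge> 1)"

definition wdeg :: "nat set \<Rightarrow> (nat \<Rightarrow> nat \<Rightarrow> real) \<Rightarrow> nat \<Rightarrow> real" where
  "wdeg V W v = (\<Sum>u\<in>V. W u v)"

definition vol :: "nat set \<Rightarrow> (nat \<Rightarrow> nat \<Rightarrow> real) \<Rightarrow> nat set \<Rightarrow> real" where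
  "vol V W S = (\<Sum>v\<in>S. wdeg V W v)"

definition supp :: "nat set \<Rightarrow> (nat \<Rightarrow> real) \<Rightarrow> nat set" where
  "supp V f = {v\<in>V. f v \<noteq> 0}"

definition wnorm2 :: "nat set \<Rightarrow> (nat \<Rightarrow> nat \<Rightarrow> real) \<Rightarrow> (nat \<Rightarrow> real) \<Rightarrow> real" where
  "wnorm2 V W f = (\<Sum>v\<in>V. wdeg V W v * (f v)\<^sup>2)"

text \<open>Sum over unordered edges {u,v}: half the ordered double sum (loop terms vanish).\<close>
definition rayleigh :: "nat set \<Rightarrow> (nat \<Rightarrow> nat \<Rightarrow> real) \<Rightarrow> (nat \<Rightarrow> real) \<Rightarrow> real" where
  "rayleigh V W f = ((\<Sum>u\<in>V. \<Sum>v\<in>V. W u v * (f u - f v)\<^sup>2) / 2) / wnorm2 V W f"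

definition cut_weight :: "nat set \<Rightarrow> (nat \<Rightarrow> nat \<Rightarrow> real) \<Rightarrow> nat set \<Rightarrow> real" where
  "cut_weight V W S = (\<Sum>u\<in>S. \<Sum>v\<in>V - S. W u v)"

definition conductance :: "nat set \<Rightarrow> (nat \<Rightarrow> nat \<Rightarrow> real) \<Rightarrow> nat set \<Rightarrow> real" where
  "conductance V W S = cut_weight V W S / min (vol V W S) (vol V W (V - S))"

definition level_set :: "nat set \<Rightarrow> (nat \<Rightarrow> real) \<Rightarrow> real \<Rightarrow> nat set" where
  "level_set V f t = {v\<in>V. f v \<ge> t}"

definition fconductance :: "nat set \<Rightarrow> (nat \<Rightarrow> nat \<Rightarrow> real) \<Rightarrow> (nat \<Rightarrow> real) \<Rightarrow> real" where
  "fconductance V W f = Min {conductance V W (level_set V f t) | t.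
      level_set V f t \<noteq> {} \<and> level_set V f t \<noteq> V}"

end

theory Submission
  imports Defs
begin

definition clip :: "real \<Rightarrow> real \<Rightarrow> real \<Rightarrow> real" where
  "clip a b x = min (max x a) b"

lemma window_aux:
  assumes AB: "\<And>m. A m \<le> B m" "\<And>m. B m \<le> A (Suc m)" and yx: "y \<le> x"
  shows "(\<Sum>m<n. clip (A m) (B m) x - clip (A m) (B m) y) \<le> max 0 (min x (A n) - y)"
proof (induction n)
  case 0 then show ?case by simp
next
  case (Suc n)
  have a1: "A n \<le> B n" "B n \<le> A (Suc n)" using AB by auto
  show ?case using Suc a1 yx unfolding clip_def
    by (auto simp: min_def max_def split: if_splits)
qed

lemma window_sum:
  assumes AB: "\<And>m. A m \<le> B m" "\<And>m. B m \<le> A (Suc m)" and yx: "y \<le> x"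
  shows "(\<Sum>m<n. clip (A m) (B m) x - clip (A m) (B m) y) \<le> x - y"
  using window_aux[of A B y x n, OF AB yx] yx by (simp add: min_def max_def split: if_splits)

lemma clip_mono: "a \<le> b \<Longrightarrow> y \<le> x \<Longrightarrow> clip a b y \<le> clip a b x"
  unfolding clip_def by auto

lemma clip_lip: "a \<le> b \<Longrightarrow> y \<le> x \<Longrightarrow> clip a b x - clip a b y \<le> x - y"
  unfolding clip_def by (auto simp: min_def max_def)

lemma window_sq:
  assumes AB: "\<And>m. A m \<le> B m" "\<And>m. B m \<le> A (Suc m)"
  shows "(\<Sum>m<n. (clip (A m) (B m) x - clip (A m) (B m) y)\<^sup>2) \<le> (x - y)\<^sup>2"
proof -
  have gen: "(\<Sum>m<n. (clip (A m) (B m) x - clip (A m) (B m) y)\<^sup>2) \<le> (x - y)\<^sup>2" if yx: "y \<le> x" for x y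
  proof -
    have "(\<Sum>m<n. (clip (A m) (B m) x - clip (A m) (B m) y)\<^sup>2)
        \<le> (\<Sum>m<n. (x - y) * (clip (A m) (B m) x - clip (A m) (B m) y))"
    proof (rule sum_mono)
      fix m
      have "0 \<le> clip (A m) (B m) x - clip (A m) (B m) y" using clip_mono[OF AB(1) yx] by simp
      moreover have "clip (A m) (B m) x - clip (A m) (B m) y \<le> x - y" using clip_lip[OF AB(1) yx] .
      ultimately show "(clip (A m) (B m) x - clip (A m) (B m) y)\<^sup>2
          \<le> (x - y) * (clip (A m) (B m) x - clip (A m) (B m) y)"
        by (simp add: power2_eq_square mult_right_mono)
    qed
    also have "\<dots> = (x - y) * (\<Sum>m<n. clip (A m) (B m) x - clip (A m) (B m) y)"
      by (simp add: sum_distrib_left)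
    also have "\<dots> \<le> (x - y) * (x - y)"
      using window_sum[of A B y x n, OF AB yx] yx by (intro mult_left_mono) auto
    finally show ?thesis by (simp add: power2_eq_square)
  qed
  show ?thesis
  proof (cases "y \<le> x")
    case True then show ?thesis using gen by auto
  next
    case False
    then have "(\<Sum>m<n. (clip (A m) (B m) y - clip (A m) (B m) x)\<^sup>2) \<le> (y - x)\<^sup>2" using gen by auto
    then show ?thesis by (simp add: power2_commute)
  qed
qed

lemma coarea_gen:
  fixes f :: "'a \<Rightarrow> real" and d :: "'a \<Rightarrow> real" and W :: "'a \<Rightarrow> 'a \<Rightarrow> real" and \<phi> :: real
  assumes fin: "finite V"
   and f0: "\<forall>v\<in>V. f v \<ge> 0"
   and cutt: "\<forall>t>0. \<phi> * (\<Sum>v\<in>V. if t \<le> f v then d v else 0)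
        \<le> (\<Sum>u\<in>V. \<Sum>v\<in>V. if t \<le> f u \<and> f v < t then W u v else 0)"
  shows "\<forall>F. (\<forall>x y. 0 \<le> x \<longrightarrow> x \<le> y \<longrightarrow> F x \<le> F y) \<longrightarrow> F 0 = 0 \<longrightarrow>
     card {x\<in>f ` V. 0 < F x} = N \<longrightarrow>
     \<phi> * (\<Sum>v\<in>V. d v * F (f v)) \<le> (\<Sum>u\<in>V. \<Sum>v\<in>V. W u v * (if f v < f u then F (f u) - F (f v) else 0))"
proof (induction N rule: less_induct)
  case (less N)
  show ?case
  proof (intro allI impI)
    fix F :: "real \<Rightarrow> real"
    assume mono: "\<forall>x y. 0 \<le> x \<longrightarrow> x \<le> y \<longrightarrow> F x \<le> F y" and F0: "F 0 = 0"
      and cardN: "card {x\<in>f ` V. 0 < F x} = N"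
    define P where "P = {x\<in>f ` V. 0 < F x}"
    have finP: "finite P" unfolding P_def using fin by auto
    have Fnn: "F (f v) \<ge> 0" if "v \<in> V" for v using mono F0 f0 that by force
    show "\<phi> * (\<Sum>v\<in>V. d v * F (f v)) \<le> (\<Sum>u\<in>V. \<Sum>v\<in>V. W u v * (if f v < f u then F (f u) - F (f v) else 0))"
    proof (cases "P = {}")
      case True
      then have "F (f v) = 0" if "v \<in> V" for v using Fnn[OF that] that unfolding P_def by force
      then have "(\<Sum>u\<in>V. \<Sum>v\<in>V. W u v * (if f v < f u then F (f u) - F (f v) else 0)) = 0"
        by (intro sum.neutral ballI) simp
      then show ?thesis using \<open>\<And>v. v \<in> V \<Longrightarrow> F (f v) = 0\<close> by simp
    next
      case False
      define t where "t = Min P"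
      have tP: "t \<in> P" unfolding t_def using finP False by simp
      have tmin: "t \<le> x" if "x \<in> P" for x unfolding t_def using finP that by simp
      have tpos: "t > 0"
      proof -
        have "t \<ge> 0" "F t > 0" using tP f0 unfolding P_def by auto
        then show ?thesis using F0 by (cases "t = 0") auto
      qed
      define c where "c = F t"
      have cpos: "c > 0" using tP unfolding c_def P_def by auto
      define F' where "F' = (\<lambda>x. if x < t then 0 else F x - c)"
      have mono': "\<forall>x y. 0 \<le> x \<longrightarrow> x \<le> y \<longrightarrow> F' x \<le> F' y"
        using mono tpos unfolding F'_def c_def by auto
      have F'0: "F' 0 = 0" unfolding F'_def using tpos by simp
      have sub: "{x\<in>f ` V. 0 < F' x} \<subset> P"
      proof
        show "{x\<in>f ` V. 0 < F' x} \<subseteq> P" unfolding P_def F'_def using cpos by (auto split: if_splits)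
        show "{x\<in>f ` V. 0 < F' x} \<noteq> P" using tP unfolding F'_def c_def by auto
      qed
      have lt: "card {x\<in>f ` V. 0 < F' x} < N"
        using psubset_card_mono[OF finP sub] cardN unfolding P_def by simp
      have IH: "\<phi> * (\<Sum>v\<in>V. d v * F' (f v)) \<le> (\<Sum>u\<in>V. \<Sum>v\<in>V. W u v * (if f v < f u then F' (f u) - F' (f v) else 0))"
        using less.IH[OF lt] mono' F'0 by blast
      have decomp: "F (f v) = F' (f v) + c * (if t \<le> f v then 1 else 0)" if "v \<in> V" for v
      proof (cases "t \<le> f v")
        case True then show ?thesis unfolding F'_def by simp
      next
        case False
        have "F (f v) = 0"
        proof (rule ccontr)
          assume "F (f v) \<noteq> 0"
          then have "f v \<in> P" using Fnn[OF that] that unfolding P_def by auto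
          then show False using tmin False by force
        qed
        then show ?thesis using False unfolding F'_def by simp
      qed
      have L: "(\<Sum>v\<in>V. d v * F (f v)) = (\<Sum>v\<in>V. d v * F' (f v)) + c * (\<Sum>v\<in>V. if t \<le> f v then d v else 0)"
      proof -
        have "(\<Sum>v\<in>V. d v * F (f v)) = (\<Sum>v\<in>V. d v * F' (f v) + c * (if t \<le> f v then d v else 0))"
          by (rule sum.cong) (auto simp: decomp algebra_simps)
        then show ?thesis by (simp add: sum.distrib sum_distrib_left)
      qed
      have pair: "W u v * (if f v < f u then F (f u) - F (f v) else 0)
          = W u v * (if f v < f u then F' (f u) - F' (f v) else 0) + c * (if t \<le> f u \<and> f v < t then W u v else 0)"
        if "u \<in> V" "v \<in> V" for u v
        using decomp[OF that(1)] decomp[OF that(2)]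
        by (auto simp: algebra_simps)
      have R: "(\<Sum>u\<in>V. \<Sum>v\<in>V. W u v * (if f v < f u then F (f u) - F (f v) else 0))
          = (\<Sum>u\<in>V. \<Sum>v\<in>V. W u v * (if f v < f u then F' (f u) - F' (f v) else 0))
            + c * (\<Sum>u\<in>V. \<Sum>v\<in>V. if t \<le> f u \<and> f v < t then W u v else 0)"
        by (simp add: pair sum.distrib sum_distrib_left cong: sum.cong)
      have "c * (\<phi> * (\<Sum>v\<in>V. if t \<le> f v then d v else 0))
           \<le> c * (\<Sum>u\<in>V. \<Sum>v\<in>V. if t \<le> f u \<and> f v < t then W u v else 0)"
        using cutt tpos cpos by (intro mult_left_mono) auto
      then show ?thesis using IH unfolding L R by (simp add: algebra_simps)
    qed
  qed
qed

lemma coarea: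
  fixes f :: "'a \<Rightarrow> real" and d :: "'a \<Rightarrow> real" and W :: "'a \<Rightarrow> 'a \<Rightarrow> real" and \<phi> :: real
    and F :: "real \<Rightarrow> real"
  assumes fin: "finite V"
   and f0: "\<forall>v\<in>V. f v \<ge> 0"
   and cutt: "\<forall>t>0. \<phi> * (\<Sum>v\<in>V. if t \<le> f v then d v else 0)
        \<le> (\<Sum>u\<in>V. \<Sum>v\<in>V. if t \<le> f u \<and> f v < t then W u v else 0)"
   and mono: "\<forall>x y. 0 \<le> x \<longrightarrow> x \<le> y \<longrightarrow> F x \<le> F y" and F0: "F 0 = 0"
  shows "\<phi> * (\<Sum>v\<in>V. d v * F (f v)) \<le> (\<Sum>u\<in>V. \<Sum>v\<in>V. W u v * (if f v < f u then F (f u) - F (f v) else 0))"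
  using coarea_gen[OF fin f0 cutt] mono F0 by blast

lemma wdeg_sym: "wgraph V W \<Longrightarrow> v \<in> V \<Longrightarrow> wdeg V W v = (\<Sum>u\<in>V. W v u)"
  unfolding wdeg_def by (rule sum.cong) (auto simp: wgraph_def)

lemma wdeg_ge1: "wgraph V W \<Longrightarrow> v \<in> V \<Longrightarrow> wdeg V W v \<ge> 1"
proof -
  assume g: "wgraph V W" and v: "v \<in> V"
  have "(\<Sum>u\<in>V. W v u) \<ge> 1" using g v unfolding wgraph_def by blast
  then show ?thesis using wdeg_sym[OF g v] by simp
qed

lemma vol_nonneg: "wgraph V W \<Longrightarrow> S \<subseteq> V \<Longrightarrow> vol V W S \<ge> 0"
proof -
  assume g: "wgraph V W" and S: "S \<subseteq> V"
  have "wdeg V W v \<ge> 0" if "v \<in> S" for v using wdeg_ge1[OF g] S that by force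
  then show ?thesis unfolding vol_def by (simp add: sum_nonneg)
qed

lemma vol_mono: "wgraph V W \<Longrightarrow> S \<subseteq> T \<Longrightarrow> T \<subseteq> V \<Longrightarrow> vol V W S \<le> vol V W T"
proof -
  assume g: "wgraph V W" and ST: "S \<subseteq> T" "T \<subseteq> V"
  have fT: "finite T" using g ST unfolding wgraph_def by (auto intro: finite_subset)
  have "wdeg V W v \<ge> 0" if "v \<in> T" for v using wdeg_ge1[OF g] ST that by force
  then show ?thesis unfolding vol_def by (intro sum_mono2[OF fT ST(1)]) auto
qed

lemma vol_pos: "wgraph V W \<Longrightarrow> S \<subseteq> V \<Longrightarrow> S \<noteq> {} \<Longrightarrow> vol V W S > 0"
proof -
  assume g: "wgraph V W" and S: "S \<subseteq> V" "S \<noteq> {}"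
  then obtain x where x: "x \<in> S" by auto
  have fS: "finite S" using g S unfolding wgraph_def by (auto intro: finite_subset)
  have "vol V W {x} \<le> vol V W S" using vol_mono[OF g _ S(1)] x by auto
  moreover have "vol V W {x} \<ge> 1" using wdeg_ge1[OF g] x S unfolding vol_def by auto
  ultimately show ?thesis by simp
qed

lemma vol_diff: "wgraph V W \<Longrightarrow> S \<subseteq> V \<Longrightarrow> vol V W (V - S) = vol V W V - vol V W S"
  unfolding vol_def wgraph_def by (simp add: sum_diff)

lemma cut_form:
  assumes g: "wgraph V W" and f0: "\<forall>v\<in>V. f v \<ge> 0"
    and half: "vol V W (supp V f) \<le> vol V W V / 2"
  shows "\<forall>t>0. fconductance V W f * (\<Sum>v\<in>V. if t \<le> f v then wdeg V W v else 0)
        \<le> (\<Sum>u\<in>V. \<Sum>v\<in>V. if t \<le> f u \<and> f v < t then W u v else 0)"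
proof (intro allI impI)
  fix t :: real assume t: "t > 0"
  have fin: "finite V" using g unfolding wgraph_def by auto
  define S where "S = level_set V f t"
  have SV: "S \<subseteq> V" unfolding S_def level_set_def by auto
  have e1: "(\<Sum>v\<in>V. if t \<le> f v then wdeg V W v else 0) = vol V W S"
    unfolding vol_def S_def level_set_def using fin by (simp add: sum.inter_filter)
  have VS: "V - S = {v\<in>V. f v < t}" unfolding S_def level_set_def by auto
  have e2: "(\<Sum>u\<in>V. \<Sum>v\<in>V. if t \<le> f u \<and> f v < t then W u v else 0) = cut_weight V W S"
  proof -
    have "(\<Sum>u\<in>V. \<Sum>v\<in>V. if t \<le> f u \<and> f v < t then W u v else 0)
        = (\<Sum>u\<in>V. if t \<le> f u then (\<Sum>v\<in>V. if f v < t then W u v else 0) else 0)"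
      by (rule sum.cong) (auto intro: sum.cong)
    also have "\<dots> = (\<Sum>u\<in>S. \<Sum>v\<in>V - S. W u v)"
      unfolding VS unfolding S_def level_set_def using fin by (simp add: sum.inter_filter)
    finally show ?thesis unfolding cut_weight_def .
  qed
  show "fconductance V W f * (\<Sum>v\<in>V. if t \<le> f v then wdeg V W v else 0)
        \<le> (\<Sum>u\<in>V. \<Sum>v\<in>V. if t \<le> f u \<and> f v < t then W u v else 0)"
    unfolding e1 e2
  proof (cases "S = {}")
    case True
    then show "fconductance V W f * vol V W S \<le> cut_weight V W S"
      unfolding vol_def cut_weight_def by simp
  next
    case False
    have Ssupp: "S \<subseteq> supp V f" unfolding S_def level_set_def supp_def using t by auto
    have volV: "vol V W V > 0" using vol_pos[OF g] False SV by auto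
    have suppV: "supp V f \<subseteq> V" unfolding supp_def by auto
    have "S \<noteq> V"
    proof
      assume "S = V"
      then have "supp V f = V" using Ssupp suppV by auto
      then show False using half volV by simp
    qed
    define Cs where "Cs = {conductance V W (level_set V f t) | t. level_set V f t \<noteq> {} \<and> level_set V f t \<noteq> V}"
    have finC: "finite Cs"
    proof (rule finite_subset)
      show "Cs \<subseteq> conductance V W ` Pow V" unfolding Cs_def level_set_def by auto
      show "finite (conductance V W ` Pow V)" using fin by simp
    qed
    have "conductance V W S \<in> Cs" unfolding Cs_def S_def using False \<open>S \<noteq> V\<close> S_def by auto
    then have le: "fconductance V W f \<le> conductance V W S"
      unfolding fconductance_def Cs_def[symmetric] using finC by simp
    have vS: "vol V W S \<le> vol V W (supp V f)" using vol_mono[OF g Ssupp suppV] .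
    have vmin: "min (vol V W S) (vol V W (V - S)) = vol V W S"
      using vol_diff[OF g SV] vS half by simp
    have vpos: "vol V W S > 0" using vol_pos[OF g SV False] .
    have "fconductance V W f * vol V W S \<le> conductance V W S * vol V W S"
      using le vpos by (intro mult_right_mono) auto
    also have "\<dots> = cut_weight V W S" unfolding conductance_def vmin using vpos by simp
    finally show "fconductance V W f * vol V W S \<le> cut_weight V W S" .
  qed
qed

lemma clip_sq: "0 \<le> c \<Longrightarrow> c \<le> d \<Longrightarrow> 0 \<le> z \<Longrightarrow> clip (c\<^sup>2) (d\<^sup>2) (z\<^sup>2) = (clip c d z)\<^sup>2"
  unfolding clip_def
  by (cases "z \<le> c"; cases "z \<le> d") (auto simp: min_def max_def power_mono intro: antisym dest: power_mono[where n=2] power2_le_imp_le)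

lemma pair_bound:
  fixes c dd lam :: "nat \<Rightarrow> real" and r x y :: real and k :: nat
  assumes k1: "k \<ge> 1" and r: "r = 1 + 1 / real k"
    and win: "\<And>m. 0 \<le> c m" "\<And>m. c m \<le> dd m" "\<And>m. dd m \<le> c (Suc m)"
    and Bn: "B \<subseteq> {..<n}" and lam: "\<And>m. lam m > 0"
    and yx: "0 \<le> y" "y < x"
  shows "(\<Sum>m\<in>B. clip ((c m)\<^sup>2) ((dd m)\<^sup>2) (x\<^sup>2) - clip ((c m)\<^sup>2) ((dd m)\<^sup>2) (y\<^sup>2))
     \<le> 2 * (real k + 1) * (x - y)\<^sup>2 + (\<Sum>m\<in>B. dd m * (if c m \<le> x \<and> x \<le> r * dd m then 1 else 0)
          * (lam m + (clip (c m) (dd m) x - clip (c m) (dd m) y)\<^sup>2 / lam m))"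
proof -
  have finB: "finite B" using Bn finite_subset by blast
  have nn2: "0 \<le> dd m * (if c m \<le> x \<and> x \<le> r * dd m then 1 else 0)
          * (lam m + (clip (c m) (dd m) x - clip (c m) (dd m) y)\<^sup>2 / lam m)" for m
    using win(1)[of m] win(2)[of m] lam[of m] by (auto intro!: mult_nonneg_nonneg add_nonneg_nonneg)
  have kpos: "real k > 0" using k1 by simp
  show ?thesis
  proof (cases "r * y < x")
    case True
    have sqwin: "\<And>m. (c m)\<^sup>2 \<le> (dd m)\<^sup>2" "\<And>m. (dd m)\<^sup>2 \<le> (c (Suc m))\<^sup>2"
    proof -
      fix m
      show "(c m)\<^sup>2 \<le> (dd m)\<^sup>2" using win(1)[of m] win(2)[of m] by (simp add: power_mono)
      show "(dd m)\<^sup>2 \<le> (c (Suc m))\<^sup>2" using win(1)[of m] win(2)[of m] win(3)[of m] by (simp add: power_mono)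
    qed
    have "(\<Sum>m\<in>B. clip ((c m)\<^sup>2) ((dd m)\<^sup>2) (x\<^sup>2) - clip ((c m)\<^sup>2) ((dd m)\<^sup>2) (y\<^sup>2))
        \<le> (\<Sum>m<n. clip ((c m)\<^sup>2) ((dd m)\<^sup>2) (x\<^sup>2) - clip ((c m)\<^sup>2) ((dd m)\<^sup>2) (y\<^sup>2))"
    proof (rule sum_mono2[OF _ Bn])
      show "finite {..<n}" by simp
      fix m show "0 \<le> clip ((c m)\<^sup>2) ((dd m)\<^sup>2) (x\<^sup>2) - clip ((c m)\<^sup>2) ((dd m)\<^sup>2) (y\<^sup>2)"
        using clip_mono[OF sqwin(1), of "y\<^sup>2" "x\<^sup>2" m] yx by (simp add: power_mono)
    qed
    also have "\<dots> \<le> x\<^sup>2 - y\<^sup>2"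
      by (rule window_sum[of "\<lambda>m. (c m)\<^sup>2" "\<lambda>m. (dd m)\<^sup>2", OF sqwin]) (use yx in \<open>simp add: power_mono\<close>)
    also have "\<dots> \<le> 2 * (real k + 1) * (x - y)\<^sup>2"
    proof -
      have "x - x / r = x / (real k + 1)" unfolding r using kpos by (simp add: field_simps)
      moreover
      have rpos: "r > 0" using r kpos by (simp add: add_pos_nonneg)
      have "y < x / r" using True rpos by (simp add: pos_less_divide_eq mult.commute)
      ultimately have "x / (real k + 1) < x - y" by linarith
      then have h: "x \<le> (real k + 1) * (x - y)" using kpos by (simp add: pos_divide_less_eq mult.commute)
      have "x\<^sup>2 - y\<^sup>2 = (x - y) * (x + y)" by (simp add: power2_eq_square algebra_simps)
      also have "\<dots> \<le> (x - y) * (2 * x)" using yx by (intro mult_left_mono) auto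
      also have "\<dots> \<le> (x - y) * (2 * ((real k + 1) * (x - y)))" using h yx by (intro mult_left_mono) auto
      finally show ?thesis by (simp add: power2_eq_square algebra_simps)
    qed
    finally show ?thesis using nn2 by (smt (verit) sum_nonneg)
  next
    case False
    have tm: "clip ((c m)\<^sup>2) ((dd m)\<^sup>2) (x\<^sup>2) - clip ((c m)\<^sup>2) ((dd m)\<^sup>2) (y\<^sup>2)
        \<le> dd m * (if c m \<le> x \<and> x \<le> r * dd m then 1 else 0)
          * (lam m + (clip (c m) (dd m) x - clip (c m) (dd m) y)\<^sup>2 / lam m)" for m
    proof -
      define X where "X = clip (c m) (dd m) x"
      define Y where "Y = clip (c m) (dd m) y"
      have eqs: "clip ((c m)\<^sup>2) ((dd m)\<^sup>2) (x\<^sup>2) - clip ((c m)\<^sup>2) ((dd m)\<^sup>2) (y\<^sup>2) = X\<^sup>2 - Y\<^sup>2"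
        unfolding X_def Y_def using clip_sq[OF win(1) win(2)] yx by simp
      have YX: "Y \<le> X" unfolding X_def Y_def using clip_mono[OF win(2)] yx by simp
      have Xd: "X \<le> dd m" "0 \<le> Y" unfolding X_def Y_def clip_def using win(1)[of m] win(2)[of m] by auto
      show ?thesis
      proof (cases "c m \<le> x \<and> x \<le> r * dd m")
        case True
        have "X\<^sup>2 - Y\<^sup>2 = (X - Y) * (X + Y)" by (simp add: power2_eq_square algebra_simps)
        also have "\<dots> \<le> (X - Y) * (2 * dd m)" using YX Xd by (intro mult_left_mono) auto
        also have "\<dots> \<le> dd m * (lam m + (X - Y)\<^sup>2 / lam m)"
        proof -
          have "2 * (X - Y) \<le> lam m + (X - Y)\<^sup>2 / lam m"
          proof -
            have "0 \<le> (lam m - (X - Y))\<^sup>2" by simp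
            then have "2 * (X - Y) * lam m \<le> (lam m)\<^sup>2 + (X - Y)\<^sup>2" by (simp add: power2_eq_square algebra_simps)
            then show ?thesis using lam[of m] by (simp add: field_simps power2_eq_square)
          qed
          moreover have "0 \<le> dd m" using win(1)[of m] win(2)[of m] by linarith
          ultimately have "dd m * (2 * (X - Y)) \<le> dd m * (lam m + (X - Y)\<^sup>2 / lam m)"
            by (rule mult_left_mono)
          then show ?thesis by (simp add: algebra_simps)
        qed
        finally show ?thesis using True eqs X_def Y_def by simp
      next
        case nc: False
        have "X = Y"
        proof (cases "x < c m")
          case True then show ?thesis unfolding X_def Y_def clip_def using yx win(2)[of m] by auto
        next
          case False
          then have "x > r * dd m" using nc by auto
          moreover have "x \<le> r * y" using \<open>\<not> r * y < x\<close> by simp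
          moreover have "r > 0" using r kpos by (simp add: add_pos_nonneg)
          ultimately have "dd m < y" by (smt (verit) mult_le_cancel_left_pos)
          then show ?thesis unfolding X_def Y_def clip_def using yx by auto
        qed
        moreover have "(if c m \<le> x \<and> x \<le> r * dd m then 1 else 0) = (0::real)" using nc by simp
        ultimately show ?thesis using eqs by simp
      qed
    qed
    have "(\<Sum>m\<in>B. clip ((c m)\<^sup>2) ((dd m)\<^sup>2) (x\<^sup>2) - clip ((c m)\<^sup>2) ((dd m)\<^sup>2) (y\<^sup>2))
      \<le> (\<Sum>m\<in>B. dd m * (if c m \<le> x \<and> x \<le> r * dd m then 1 else 0)
          * (lam m + (clip (c m) (dd m) x - clip (c m) (dd m) y)\<^sup>2 / lam m))"
      by (rule sum_mono) (rule tm)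
    moreover have "0 \<le> 2 * (real k + 1) * (x - y)\<^sup>2" by simp
    ultimately show ?thesis by linarith
  qed
qed

definition bump :: "real \<Rightarrow> real \<Rightarrow> real \<Rightarrow> real \<Rightarrow> real" where
  "bump A B h x = max 0 (min (min (x - A) (B - x)) h)"

lemma bump_clip: "A \<le> B \<Longrightarrow> bump A B h x = bump A B h (clip A B x)"
  unfolding bump_def clip_def by (auto simp: min_def max_def)

lemma bump_lip: "\<bar>bump A B h x - bump A B h y\<bar> \<le> \<bar>x - y\<bar>"
  unfolding bump_def by (auto simp: min_def max_def abs_if)

lemma bump_sq: "A \<le> B \<Longrightarrow> (bump A B h x - bump A B h y)\<^sup>2 \<le> (clip A B x - clip A B y)\<^sup>2"
proof -
  assume AB: "A \<le> B"
  have "\<bar>bump A B h x - bump A B h y\<bar> \<le> \<bar>clip A B x - clip A B y\<bar>"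
    using bump_lip[of A B h "clip A B x" "clip A B y"] bump_clip[OF AB, of h x] bump_clip[OF AB, of h y] by simp
  then show ?thesis by (simp add: abs_le_square_iff)
qed

lemma sum_swap3: "(\<Sum>u\<in>A. \<Sum>v\<in>B. \<Sum>m\<in>C. g m u v) = (\<Sum>m\<in>C. \<Sum>u\<in>A. \<Sum>v\<in>B. g m u v)"
proof -
  have "(\<Sum>u\<in>A. \<Sum>v\<in>B. \<Sum>m\<in>C. g m u v) = (\<Sum>u\<in>A. \<Sum>m\<in>C. \<Sum>v\<in>B. g m u v)"
    by (rule sum.cong[OF refl]) (rule sum.swap)
  also have "\<dots> = (\<Sum>m\<in>C. \<Sum>u\<in>A. \<Sum>v\<in>B. g m u v)" by (rule sum.swap)
  finally show ?thesis .
qed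

lemma grid_facts:
  fixes k :: nat and a0 :: real
  assumes k1: "k \<ge> 1" and a0: "a0 > 0"
  defines "r \<equiv> 1 + 1 / real k"
  shows "r > 1" "r \<le> 2" "\<And>i j. i \<le> j \<Longrightarrow> a0 * r ^ i \<le> a0 * r ^ j"
    "\<And>i j. i < j \<Longrightarrow> a0 * r ^ i < a0 * r ^ j" "\<And>i. a0 * r ^ i > 0"
    "\<And>j. r ^ j \<le> exp (real j / real k)"
proof -
  have K: "real k \<ge> 1" using k1 by simp
  show r1: "r > 1" unfolding r_def using K by simp
  show "r \<le> 2" unfolding r_def using K by simp
  show "\<And>i j. i \<le> j \<Longrightarrow> a0 * r ^ i \<le> a0 * r ^ j" using r1 a0 by (simp add: power_increasing)
  show "\<And>i j. i < j \<Longrightarrow> a0 * r ^ i < a0 * r ^ j" using r1 a0 by (simp add: power_strict_increasing)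
  show "\<And>i. a0 * r ^ i > 0" using r1 a0 by simp
  fix j :: nat
  have "r \<le> exp (1 / real k)" unfolding r_def using exp_ge_add_one_self[of "1 / real k"] by simp
  then have "r ^ j \<le> exp (1 / real k) ^ j" using r1 by (intro power_mono) auto
  also have "\<dots> = exp (real j / real k)" by (simp add: exp_of_nat_mult[symmetric])
  finally show "r ^ j \<le> exp (real j / real k)" .
qed

lemma pow5_bounds:
  fixes x :: real assumes "0 \<le> x" "x \<le> 1"
  shows "x \<le> (1 + x) ^ 5 - 1" "(1 + x) ^ 5 - 1 \<le> 31 * x"
proof -
  have e: "(1 + x) ^ 5 - 1 = x * (5 + 10 * x + 10 * x^2 + 5 * x^3 + x^4)"
    by (simp add: algebra_simps power2_eq_square power3_eq_cube power4_eq_xxxx eval_nat_numeral)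
  have p: "x^2 \<le> 1" "x^3 \<le> 1" "x^4 \<le> 1" "0 \<le> x^2" "0 \<le> x^3" "0 \<le> x^4"
    using assms by (auto simp: power_le_one)
  show "x \<le> (1 + x) ^ 5 - 1" unfolding e using assms p
    by (smt (verit) mult_le_cancel_left1 mult_nonneg_nonneg)
  have "5 + 10 * x + 10 * x^2 + 5 * x^3 + x^4 \<le> 31" using p assms by linarith
  then show "(1 + x) ^ 5 - 1 \<le> 31 * x" unfolding e using assms(1) by (simp add: mult_left_mono mult.commute)
qed

lemma few_good:
  fixes V :: "nat set" and W :: "nat \<Rightarrow> nat \<Rightarrow> real" and k :: nat and f :: "nat \<Rightarrow> real"
    and a0 :: real and n :: nat and G :: "nat set"
  defines "r \<equiv> 1 + 1 / real k"
  defines "a \<equiv> \<lambda>i. a0 * r ^ i"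
  defines "gq \<equiv> \<lambda>m v. bump (a (5*m)) (a (5*m+5)) (a (5*m) / real k) (f v)"
  defines "R \<equiv> rayleigh V W f" and "\<phi> \<equiv> fconductance V W f"
  defines "s0 \<equiv> 48 * exp 30"
  defines "\<beta> \<equiv> s0\<^sup>2 * (real k)\<^sup>2 * R / (\<phi>\<^sup>2 / R)"
  assumes g: "wgraph V W" and k1: "k \<ge> 1" and f0: "\<forall>v\<in>V. f v \<ge> 0"
    and half: "vol V W (supp V f) \<le> vol V W V / 2" and Rpos: "R > 0"
    and a0: "a0 > 0" and low: "\<forall>v\<in>V. f v > 0 \<longrightarrow> a (10 * k) \<le> f v"
    and top: "\<forall>v\<in>V. f v < a (5 * n)"
    and Gsub: "G \<subseteq> {..<n}" and cardG: "card G < k"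
    and phipos: "\<phi> > 0"
    and bad: "\<forall>m<n. m \<notin> G \<longrightarrow>
        \<beta> * wnorm2 V W (gq m) \<le> (\<Sum>u\<in>V. \<Sum>v\<in>V. W u v * (gq m u - gq m v)\<^sup>2) / 2"
  shows "\<phi> \<le> 16 * exp 30 * real k * R"
proof -
  have fin: "finite V" using g unfolding wgraph_def by auto
  define K where "K = real k"
  have K1: "K \<ge> 1" unfolding K_def using k1 by simp
  note gf = grid_facts[OF k1 a0, folded r_def]
  have r1: "r > 1" and r2: "r \<le> 2" using gf by auto
  have amono: "\<And>i j. i \<le> j \<Longrightarrow> a i \<le> a j" unfolding a_def using gf by auto
  have apos: "\<And>i. a i > 0" unfolding a_def using gf by auto
  have aadd: "\<And>i j. a (i + j) = a i * r ^ j" unfolding a_def by (simp add: power_add)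
  have rexp: "\<And>j. r ^ j \<le> exp (real j / K)" unfolding K_def using gf by auto
  have Wnn: "\<And>u v. u \<in> V \<Longrightarrow> v \<in> V \<Longrightarrow> W u v \<ge> 0" using g unfolding wgraph_def by auto
  have Wsym: "\<And>u v. u \<in> V \<Longrightarrow> v \<in> V \<Longrightarrow> W u v = W v u" using g unfolding wgraph_def by auto
  have dpos: "\<And>v. v \<in> V \<Longrightarrow> wdeg V W v \<ge> 1" using wdeg_ge1[OF g] by auto
  have dnn: "\<And>v. v \<in> V \<Longrightarrow> wdeg V W v \<ge> 0" using dpos by (meson order_trans zero_le_one)
  define N where "N = wnorm2 V W f"
  define Num where "Num = (\<Sum>u\<in>V. \<Sum>v\<in>V. W u v * (f u - f v)\<^sup>2)"
  have R_eq: "R = (Num / 2) / N" unfolding R_def rayleigh_def N_def Num_def by simp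
  have Nnn: "N \<ge> 0" unfolding N_def wnorm2_def using dnn by (intro sum_nonneg mult_nonneg_nonneg) auto
  have Npos: "N > 0"
  proof (rule ccontr)
    assume "\<not> N > 0" then have "N = 0" using Nnn by simp
    then show False using Rpos R_eq by simp
  qed
  have Num_eq: "Num = 2 * R * N" using R_eq Npos by (simp add: field_simps)
  define c where "c = (\<lambda>m. a (5*m+2))"
  define dd where "dd = (\<lambda>m. a (5*m+3))"
  define Bad where "Bad = {..<n} - G"
  have Badn: "Bad \<subseteq> {..<n}" unfolding Bad_def by auto
  have finBad: "finite Bad" unfolding Bad_def by simp
  define F where "F = (\<lambda>x. \<Sum>m\<in>Bad. clip ((c m)\<^sup>2) ((dd m)\<^sup>2) (x\<^sup>2) - (c m)\<^sup>2)"
  have c0: "\<And>m. 0 \<le> c m" unfolding c_def using apos less_imp_le by blast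
  have cd: "\<And>m. c m \<le> dd m" unfolding c_def dd_def using amono by simp
  have dc: "\<And>m. dd m \<le> c (Suc m)" unfolding c_def dd_def using amono by simp
  have cd2: "\<And>m. (c m)\<^sup>2 \<le> (dd m)\<^sup>2" using c0 cd by (simp add: power_mono)
  have Fmono: "\<forall>x y. 0 \<le> x \<longrightarrow> x \<le> y \<longrightarrow> F x \<le> F y"
  proof (intro allI impI)
    fix x y :: real assume "0 \<le> x" "x \<le> y"
    then have "x\<^sup>2 \<le> y\<^sup>2" by (simp add: power_mono)
    then show "F x \<le> F y" unfolding F_def using clip_mono[OF cd2] by (intro sum_mono) auto
  qed
  have F0: "F 0 = 0" unfolding F_def clip_def using cd2 c0 by (intro sum.neutral) auto
  define D where "D = (\<Sum>u\<in>V. \<Sum>v\<in>V. W u v * (if f v < f u then F (f u) - F (f v) else 0))"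
  have CA: "\<phi> * (\<Sum>v\<in>V. wdeg V W v * F (f v)) \<le> D"
    unfolding D_def \<phi>_def by (rule coarea[OF fin f0 cut_form[OF g f0 half] Fmono F0])
  have Flow: "F (f v) \<ge> exp (-30) * (f v)\<^sup>2" if v: "v \<in> V" for v
  proof (cases "f v > 0")
    case False
    then have "f v = 0" using f0 v by force
    then show ?thesis using F0 by simp
  next
    case True
    define x where "x = f v"
    have x0: "x > 0" and xlow: "a (10 * k) \<le> x" and xtop: "x < a (5 * n)"
      using True low top v unfolding x_def by auto
    define P where "P = {p. a (5 * p) \<le> x}"
    have Psub: "P \<subseteq> {..<n}"
    proof
      fix p assume "p \<in> P"
      then have "a (5 * p) < a (5 * n)" using xtop unfolding P_def by simp
      then show "p \<in> {..<n}" using amono[of "5*n" "5*p"] by (cases "p < n") auto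
    qed
    have finP: "finite P" using Psub finite_subset by blast
    have kP: "2 * k \<in> P" unfolding P_def using xlow by (simp add: mult.assoc)
    define p where "p = Max P"
    have pP: "p \<in> P" unfolding p_def using finP kP by (intro Max_in) auto
    have p2k: "2 * k \<le> p" unfolding p_def using finP kP by simp
    have pn: "p < n" using pP Psub by auto
    have ap: "a (5 * p) \<le> x" using pP unfolding P_def by simp
    have ap1: "x < a (5 * p + 5)"
    proof (rule ccontr)
      assume "\<not> x < a (5 * p + 5)"
      then have "Suc p \<in> P" unfolding P_def by (simp add: add.commute)
      then have "Suc p \<le> p" unfolding p_def using finP by simp
      then show False by simp
    qed
    define I where "I = {p - 2 * k..<p}"
    define b0 where "b0 = a (5 * (p - 2 * k))"
    have IB: "I - G \<subseteq> Bad" unfolding I_def Bad_def using pn by auto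
    have tnn: "0 \<le> clip ((c m)\<^sup>2) ((dd m)\<^sup>2) (y\<^sup>2) - (c m)\<^sup>2" for m y
      unfolding clip_def using cd2[of m] by auto
    have "F x \<ge> (\<Sum>m\<in>I - G. clip ((c m)\<^sup>2) ((dd m)\<^sup>2) (x\<^sup>2) - (c m)\<^sup>2)"
      unfolding F_def using finBad IB tnn by (intro sum_mono2) auto
    moreover have "(\<Sum>m\<in>I - G. clip ((c m)\<^sup>2) ((dd m)\<^sup>2) (x\<^sup>2) - (c m)\<^sup>2) \<ge> (\<Sum>m\<in>I - G. (2 / K) * b0\<^sup>2)"
    proof (rule sum_mono)
      fix m assume mI: "m \<in> I - G"
      then have m1: "p - 2 * k \<le> m" "m < p" unfolding I_def by auto
      have "dd m \<le> a (5 * p)" unfolding dd_def using m1 amono by simp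
      then have "dd m \<le> x" using ap by simp
      then have "(dd m)\<^sup>2 \<le> x\<^sup>2" using c0[of m] cd[of m] by (simp add: power_mono)
      then have cl: "clip ((c m)\<^sup>2) ((dd m)\<^sup>2) (x\<^sup>2) = (dd m)\<^sup>2" unfolding clip_def using cd2[of m] by simp
      have b0c: "b0 \<le> c m" unfolding b0_def c_def using m1 amono by simp
      have b0pos: "b0 > 0" unfolding b0_def using apos by simp
      have ddc: "dd m = c m * r" unfolding dd_def c_def a_def by (simp add: power_add eval_nat_numeral)
      have "(dd m)\<^sup>2 - (c m)\<^sup>2 = (c m)\<^sup>2 * (r\<^sup>2 - 1)" unfolding ddc by (simp add: algebra_simps power_mult_distrib)
      moreover have "r\<^sup>2 - 1 \<ge> 2 / K" unfolding r_def K_def using K1 unfolding K_def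
        by (simp add: power2_eq_square field_simps)
      moreover have "(c m)\<^sup>2 \<ge> b0\<^sup>2" using b0c b0pos by (simp add: power_mono)
      moreover have "2 / K \<ge> 0" using K1 by simp
      ultimately have "(dd m)\<^sup>2 - (c m)\<^sup>2 \<ge> b0\<^sup>2 * (2 / K)"
        using mult_mono[of "b0\<^sup>2" "(c m)\<^sup>2" "2 / K" "r\<^sup>2 - 1"] by simp
      then show "2 / K * b0\<^sup>2 \<le> clip ((c m)\<^sup>2) ((dd m)\<^sup>2) (x\<^sup>2) - (c m)\<^sup>2" unfolding cl by (simp add: mult.commute)
    qed
    moreover have "card (I - G) \<ge> k"
    proof -
      have "card I - card G \<le> card (I - G)" using diff_card_le_card_Diff Gsub finite_subset by blast
      moreover have "card I = 2 * k" unfolding I_def using p2k by simp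
      ultimately show ?thesis using cardG by linarith
    qed
    ultimately have F1: "F x \<ge> 2 * b0\<^sup>2"
    proof -
      assume A1: "F x \<ge> (\<Sum>m\<in>I - G. clip ((c m)\<^sup>2) ((dd m)\<^sup>2) (x\<^sup>2) - (c m)\<^sup>2)"
        and A2: "(\<Sum>m\<in>I - G. clip ((c m)\<^sup>2) ((dd m)\<^sup>2) (x\<^sup>2) - (c m)\<^sup>2) \<ge> (\<Sum>m\<in>I - G. (2 / K) * b0\<^sup>2)"
        and A3: "card (I - G) \<ge> k"
      have "(\<Sum>m\<in>I - G. (2 / K) * b0\<^sup>2) = real (card (I - G)) * (2 / K) * b0\<^sup>2" by simp
      also have "\<dots> \<ge> K * (2 / K) * b0\<^sup>2" unfolding K_def using A3 by (intro mult_right_mono) auto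
      finally show ?thesis using A1 A2 K1 by simp
    qed
    have "x < b0 * r ^ (10 * k + 5)"
    proof -
      have "5 * p + 5 = 5 * (p - 2 * k) + (10 * k + 5)" using p2k by simp
      then show ?thesis using ap1 aadd unfolding b0_def by metis
    qed
    also have "\<dots> \<le> b0 * exp 15"
    proof -
      have "r ^ (10 * k + 5) \<le> exp (real (10 * k + 5) / K)" by (rule rexp)
      also have "\<dots> \<le> exp 15"
      proof -
        have "real (10 * k + 5) / K = 10 + 5 / K" unfolding K_def using K1 by (simp add: field_simps K_def)
        also have "\<dots> \<le> 15" using K1 by (simp add: field_simps)
        finally show ?thesis by simp
      qed
      finally show ?thesis unfolding b0_def using apos by (intro mult_left_mono) (auto simp: less_imp_le)
    qed
    finally have "x < b0 * exp 15" .
    then have "x\<^sup>2 < (b0 * exp 15)\<^sup>2" using x0 by (intro power_strict_mono) auto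
    also have "\<dots> = b0\<^sup>2 * exp 30" by (simp add: power_mult_distrib power2_eq_square exp_add[symmetric])
    finally have "exp (-30) * x\<^sup>2 \<le> b0\<^sup>2" by (simp add: exp_minus field_simps)
    then show ?thesis using F1 x_def by (smt (verit) zero_le_power2)
  qed
  have LB: "exp (-30) * N \<le> (\<Sum>v\<in>V. wdeg V W v * F (f v))"
  proof -
    have "exp (-30) * N = (\<Sum>v\<in>V. wdeg V W v * (exp (-30) * (f v)\<^sup>2))"
      unfolding N_def wnorm2_def by (simp add: sum_distrib_left algebra_simps)
    also have "\<dots> \<le> (\<Sum>v\<in>V. wdeg V W v * F (f v))"
      using Flow dnn by (intro sum_mono mult_left_mono) auto
    finally show ?thesis .
  qed
  have s0pos: "s0 > 0" unfolding s0_def by simp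
  define \<kappa> where "\<kappa> = \<phi> / (s0 * R)"
  have kpos: "\<kappa> > 0" unfolding \<kappa>_def using phipos s0pos Rpos by simp
  define A where "A = (\<lambda>m. a (5*m))"
  define lam where "lam = (\<lambda>m. A m / \<kappa>)"
  have Apos: "\<And>m. A m > 0" unfolding A_def using apos by simp
  have lampos: "\<And>m. lam m > 0" unfolding lam_def using Apos kpos by simp
  define ind where "ind = (\<lambda>m u. if c m \<le> f u \<and> f u \<le> r * dd m then 1 else (0::real))"
  define Em2 where "Em2 = (\<lambda>m. \<Sum>u\<in>V. \<Sum>v\<in>V. W u v * (clip (c m) (dd m) (f u) - clip (c m) (dd m) (f v))\<^sup>2)"
  define Qn where "Qn = (\<lambda>m. \<Sum>u\<in>V. \<Sum>v\<in>V. W u v * (gq m u - gq m v)\<^sup>2)"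
  define Plat where "Plat = (\<lambda>m. {u\<in>V. c m \<le> f u \<and> f u \<le> r * dd m})"
  have Em2nn: "\<And>m. Em2 m \<ge> 0" unfolding Em2_def using Wnn by (intro sum_nonneg mult_nonneg_nonneg) auto
  have Qnnn: "\<And>m. Qn m \<ge> 0" unfolding Qn_def using Wnn by (intro sum_nonneg mult_nonneg_nonneg) auto
  have Numnn: "Num \<ge> 0" unfolding Num_def using Wnn by (intro sum_nonneg mult_nonneg_nonneg) auto
  have pair: "W u v * (if f v < f u then F (f u) - F (f v) else 0)
     \<le> 2 * (K + 1) * (W u v * (f u - f v)\<^sup>2)
       + (\<Sum>m\<in>Bad. dd m * lam m * (W u v * ind m u))
       + (\<Sum>m\<in>Bad. dd m / lam m * (W u v * (clip (c m) (dd m) (f u) - clip (c m) (dd m) (f v))\<^sup>2))"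
    if uv: "u \<in> V" "v \<in> V" for u v
  proof -
    have W0: "W u v \<ge> 0" using Wnn uv by simp
    have T1: "0 \<le> (\<Sum>m\<in>Bad. dd m * lam m * (W u v * ind m u))"
      unfolding ind_def using W0 lampos c0 cd by (intro sum_nonneg mult_nonneg_nonneg) (auto intro: order_trans less_imp_le)
    have T2: "0 \<le> (\<Sum>m\<in>Bad. dd m / lam m * (W u v * (clip (c m) (dd m) (f u) - clip (c m) (dd m) (f v))\<^sup>2))"
      using W0 lampos c0 cd by (intro sum_nonneg mult_nonneg_nonneg divide_nonneg_nonneg) (auto intro: order_trans less_imp_le)
    show ?thesis
    proof (cases "f v < f u")
      case False
      have "0 \<le> 2 * (K + 1) * (W u v * (f u - f v)\<^sup>2)" using W0 K1 by simp
      then show ?thesis using T1 T2 False by simp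
    next
      case True
      have FF: "F (f u) - F (f v) = (\<Sum>m\<in>Bad. clip ((c m)\<^sup>2) ((dd m)\<^sup>2) ((f u)\<^sup>2) - clip ((c m)\<^sup>2) ((dd m)\<^sup>2) ((f v)\<^sup>2))"
        unfolding F_def by (simp add: sum_subtractf)
      have pb: "F (f u) - F (f v) \<le> 2 * (K + 1) * (f u - f v)\<^sup>2 + (\<Sum>m\<in>Bad. dd m * ind m u
          * (lam m + (clip (c m) (dd m) (f u) - clip (c m) (dd m) (f v))\<^sup>2 / lam m))"
        unfolding FF ind_def K_def
        by (rule pair_bound[where c=c and dd=dd and lam=lam, OF k1 r_def[THEN meta_eq_to_obj_eq] c0 cd dc Badn lampos]) (use True f0 uv in auto)
      have "W u v * (F (f u) - F (f v)) \<le> W u v * (2 * (K + 1) * (f u - f v)\<^sup>2 + (\<Sum>m\<in>Bad. dd m * ind m u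
          * (lam m + (clip (c m) (dd m) (f u) - clip (c m) (dd m) (f v))\<^sup>2 / lam m)))"
        using pb W0 by (rule mult_left_mono)
      also have "\<dots> = 2 * (K + 1) * (W u v * (f u - f v)\<^sup>2) + (\<Sum>m\<in>Bad. dd m * lam m * (W u v * ind m u)
         + dd m / lam m * (W u v * ind m u * (clip (c m) (dd m) (f u) - clip (c m) (dd m) (f v))\<^sup>2))"
        using lampos by (simp add: sum_distrib_left algebra_simps add_divide_distrib)
      also have "\<dots> \<le> 2 * (K + 1) * (W u v * (f u - f v)\<^sup>2) + (\<Sum>m\<in>Bad. dd m * lam m * (W u v * ind m u)
         + dd m / lam m * (W u v * (clip (c m) (dd m) (f u) - clip (c m) (dd m) (f v))\<^sup>2))"
      proof -
        have "dd m / lam m * (W u v * ind m u * (clip (c m) (dd m) (f u) - clip (c m) (dd m) (f v))\<^sup>2)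
           \<le> dd m / lam m * (W u v * (clip (c m) (dd m) (f u) - clip (c m) (dd m) (f v))\<^sup>2)" for m
        proof -
          have "0 \<le> dd m / lam m" using lampos[of m] c0[of m] cd[of m] by simp
          moreover have "W u v * ind m u * (clip (c m) (dd m) (f u) - clip (c m) (dd m) (f v))\<^sup>2
             \<le> W u v * (clip (c m) (dd m) (f u) - clip (c m) (dd m) (f v))\<^sup>2"
            unfolding ind_def using W0 by simp
          ultimately show ?thesis by (intro mult_left_mono)
        qed
        then show ?thesis by (simp add: sum_mono)
      qed
      finally show ?thesis using True by (simp add: sum.distrib)
    qed
  qed
  have volP: "(\<Sum>u\<in>V. \<Sum>v\<in>V. W u v * ind m u) = vol V W (Plat m)" for m
  proof -
    have "(\<Sum>u\<in>V. \<Sum>v\<in>V. W u v * ind m u) = (\<Sum>u\<in>V. ind m u * wdeg V W u)"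
    proof (rule sum.cong[OF refl])
      fix u assume u: "u \<in> V"
      show "(\<Sum>v\<in>V. W u v * ind m u) = ind m u * wdeg V W u"
        using wdeg_sym[OF g u] by (simp add: sum_distrib_left mult.commute)
    qed
    also have "\<dots> = vol V W (Plat m)"
      unfolding vol_def Plat_def ind_def using fin by (simp add: sum.inter_filter) (rule sum.cong, auto)
    finally show ?thesis .
  qed
  have Dle: "D \<le> 2 * (K + 1) * Num + (\<Sum>m\<in>Bad. dd m * lam m * vol V W (Plat m))
      + (\<Sum>m\<in>Bad. dd m / lam m * Em2 m)"
  proof -
    have "D \<le> (\<Sum>u\<in>V. \<Sum>v\<in>V. 2 * (K + 1) * (W u v * (f u - f v)\<^sup>2)
       + (\<Sum>m\<in>Bad. dd m * lam m * (W u v * ind m u))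
       + (\<Sum>m\<in>Bad. dd m / lam m * (W u v * (clip (c m) (dd m) (f u) - clip (c m) (dd m) (f v))\<^sup>2)))"
      unfolding D_def by (intro sum_mono pair)
    also have "\<dots> = 2 * (K + 1) * Num + (\<Sum>m\<in>Bad. \<Sum>u\<in>V. \<Sum>v\<in>V. dd m * lam m * (W u v * ind m u))
       + (\<Sum>m\<in>Bad. \<Sum>u\<in>V. \<Sum>v\<in>V. dd m / lam m * (W u v * (clip (c m) (dd m) (f u) - clip (c m) (dd m) (f v))\<^sup>2))"
    proof -
      have s1: "(\<Sum>u\<in>V. \<Sum>v\<in>V. 2 * (K + 1) * (W u v * (f u - f v)\<^sup>2)) = 2 * (K + 1) * Num"
        unfolding Num_def by (simp add: sum_distrib_left)
      have s2: "(\<Sum>u\<in>V. \<Sum>v\<in>V. \<Sum>m\<in>Bad. dd m * lam m * (W u v * ind m u))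
         = (\<Sum>m\<in>Bad. \<Sum>u\<in>V. \<Sum>v\<in>V. dd m * lam m * (W u v * ind m u))" by (rule sum_swap3)
      have s3: "(\<Sum>u\<in>V. \<Sum>v\<in>V. \<Sum>m\<in>Bad. dd m / lam m * (W u v * (clip (c m) (dd m) (f u) - clip (c m) (dd m) (f v))\<^sup>2))
         = (\<Sum>m\<in>Bad. \<Sum>u\<in>V. \<Sum>v\<in>V. dd m / lam m * (W u v * (clip (c m) (dd m) (f u) - clip (c m) (dd m) (f v))\<^sup>2))"
        by (rule sum_swap3)
      show ?thesis
        by (simp only: sum.distrib s1 s2 s3)
    qed
    also have "\<dots> = 2 * (K + 1) * Num + (\<Sum>m\<in>Bad. dd m * lam m * vol V W (Plat m))
      + (\<Sum>m\<in>Bad. dd m / lam m * Em2 m)"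
      unfolding Em2_def volP[symmetric] by (simp add: sum_distrib_left)
    finally show ?thesis .
  qed
  have Kpos: "K > 0" using K1 by simp
  have beta_eq: "\<beta> = K\<^sup>2 / \<kappa>\<^sup>2"
    unfolding \<beta>_def \<kappa>_def K_def using phipos Rpos s0pos by (simp add: field_simps power2_eq_square)
  have dBad: "dd m * lam m * vol V W (Plat m) \<le> 8 * \<kappa> * (Qn m / 2)
      \<and> dd m / lam m * Em2 m \<le> 8 * \<kappa> * Em2 m" if mB: "m \<in> Bad" for m
  proof -
    have dA: "dd m = A m * r ^ 3" unfolding dd_def A_def a_def by (simp add: power_add eval_nat_numeral)
    have r3: "r ^ 3 \<le> 8" using r2 r1 power_mono[of r 2 3] by simp
    have r3p: "r ^ 3 > 0" using r1 by simp
    have e1: "dd m / lam m = r ^ 3 * \<kappa>" unfolding dA lam_def using Apos[of m] kpos by (simp add: field_simps)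
    have e2: "dd m * lam m = r ^ 3 * \<kappa> * ((A m)\<^sup>2 / \<kappa>\<^sup>2)" unfolding dA lam_def using Apos[of m] kpos
      by (simp add: field_simps power2_eq_square)
    have plat: "gq m v = A m / K" if "v \<in> Plat m" for v
    proof -
      have fv: "c m \<le> f v" "f v \<le> r * dd m" using that unfolding Plat_def by auto
      have h1: "A m + A m / K \<le> c m"
      proof -
        have "A m + A m / K = A m * r" unfolding r_def K_def by (simp add: algebra_simps)
        also have "\<dots> = a (5*m+1)" unfolding A_def a_def by (simp add: power_add)
        also have "\<dots> \<le> c m" unfolding c_def using amono by simp
        finally show ?thesis .
      qed
      have h2: "r * dd m + A m / K \<le> a (5*m+5)"
      proof -
        have e4: "r * dd m = a (5*m+4)" unfolding dd_def a_def by (simp add: power_add eval_nat_numeral)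
        have e5: "a (5*m+5) = a (5*m+4) + a (5*m+4) / K"
        proof -
          have "a (5*m+5) = a (5*m+4) * r" unfolding a_def by (simp add: power_add eval_nat_numeral)
          then show ?thesis unfolding r_def K_def by (simp add: algebra_simps)
        qed
        have "A m \<le> a (5*m+4)" unfolding A_def using amono by simp
        then have "A m / K \<le> a (5*m+4) / K" using Kpos by (simp add: divide_right_mono)
        then show ?thesis using e4 e5 by simp
      qed
      have "A m / K \<ge> 0" using Apos[of m] Kpos by simp
      moreover have "gq m v = bump (A m) (a (5*m+5)) (A m / K) (f v)" unfolding gq_def A_def K_def by simp
      ultimately show ?thesis unfolding bump_def
        using fv h1 h2 by (simp add: min_def max_def)
    qed
    have Nq: "wnorm2 V W (gq m) \<ge> (A m / K)\<^sup>2 * vol V W (Plat m)"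
    proof -
      have PV: "Plat m \<subseteq> V" unfolding Plat_def by auto
      have "(A m / K)\<^sup>2 * vol V W (Plat m) = (\<Sum>v\<in>Plat m. wdeg V W v * (gq m v)\<^sup>2)"
        unfolding vol_def by (simp add: sum_distrib_left plat mult.commute[of "(A m / K)\<^sup>2"])
      also have "\<dots> \<le> (\<Sum>v\<in>V. wdeg V W v * (gq m v)\<^sup>2)"
        using fin PV dnn by (intro sum_mono2) auto
      finally show ?thesis unfolding wnorm2_def .
    qed
    have mn: "m < n" "m \<notin> G" using mB unfolding Bad_def by auto
    have bq: "\<beta> * wnorm2 V W (gq m) \<le> Qn m / 2" using bad mn unfolding Qn_def by auto
    have bnn: "\<beta> \<ge> 0" unfolding beta_eq by simp
    have "(A m)\<^sup>2 / \<kappa>\<^sup>2 * vol V W (Plat m) = \<beta> * ((A m / K)\<^sup>2 * vol V W (Plat m))"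
      unfolding beta_eq using Kpos by (simp add: field_simps power2_eq_square)
    also have "\<dots> \<le> \<beta> * wnorm2 V W (gq m)" using Nq bnn by (rule mult_left_mono)
    also have "\<dots> \<le> Qn m / 2" by (rule bq)
    finally have X: "(A m)\<^sup>2 / \<kappa>\<^sup>2 * vol V W (Plat m) \<le> Qn m / 2" .
    have "dd m * lam m * vol V W (Plat m) = r ^ 3 * \<kappa> * ((A m)\<^sup>2 / \<kappa>\<^sup>2 * vol V W (Plat m))"
      unfolding e2 by simp
    also have "\<dots> \<le> r ^ 3 * \<kappa> * (Qn m / 2)" using X r3p kpos by (intro mult_left_mono) auto
    also have "\<dots> \<le> 8 * \<kappa> * (Qn m / 2)" using r3 kpos Qnnn[of m] by (intro mult_right_mono) auto
    finally have P1: "dd m * lam m * vol V W (Plat m) \<le> 8 * \<kappa> * (Qn m / 2)" .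
    have P2: "dd m / lam m * Em2 m \<le> 8 * \<kappa> * Em2 m" unfolding e1
      using r3 kpos Em2nn[of m] by (intro mult_right_mono) auto
    show ?thesis using P1 P2 by simp
  qed
  have QnSum: "(\<Sum>m<n. Qn m) \<le> Num"
  proof -
    have "(\<Sum>m<n. Qn m) = (\<Sum>u\<in>V. \<Sum>v\<in>V. \<Sum>m<n. W u v * (gq m u - gq m v)\<^sup>2)"
      unfolding Qn_def by (rule sum_swap3[symmetric])
    also have "\<dots> \<le> (\<Sum>u\<in>V. \<Sum>v\<in>V. W u v * (f u - f v)\<^sup>2)"
    proof (intro sum_mono)
      fix u v assume uv: "u \<in> V" "v \<in> V"
      have "(\<Sum>m<n. (gq m u - gq m v)\<^sup>2) \<le> (\<Sum>m<n. (clip (A m) (a (5*m+5)) (f u) - clip (A m) (a (5*m+5)) (f v))\<^sup>2)"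
      proof (rule sum_mono)
        fix m
        have "A m \<le> a (5*m+5)" unfolding A_def using amono by simp
        then show "(gq m u - gq m v)\<^sup>2 \<le> (clip (A m) (a (5*m+5)) (f u) - clip (A m) (a (5*m+5)) (f v))\<^sup>2"
          unfolding gq_def A_def K_def by (rule bump_sq)
      qed
      also have "\<dots> \<le> (f u - f v)\<^sup>2"
      proof (rule window_sq[of A "\<lambda>m. a (5*m+5)"])
        fix m
        show "A m \<le> a (5*m+5)" unfolding A_def using amono by simp
        show "a (5*m+5) \<le> A (Suc m)" unfolding A_def by (simp add: add.commute)
      qed
      finally have "(\<Sum>m<n. (gq m u - gq m v)\<^sup>2) \<le> (f u - f v)\<^sup>2" .
      then show "(\<Sum>m<n. W u v * (gq m u - gq m v)\<^sup>2) \<le> W u v * (f u - f v)\<^sup>2"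
        using Wnn[OF uv] by (simp add: sum_distrib_left[symmetric] mult_left_mono)
    qed
    finally show ?thesis unfolding Num_def .
  qed
  have Em2Sum: "(\<Sum>m<n. Em2 m) \<le> Num"
  proof -
    have "(\<Sum>m<n. Em2 m) = (\<Sum>u\<in>V. \<Sum>v\<in>V. \<Sum>m<n. W u v * (clip (c m) (dd m) (f u) - clip (c m) (dd m) (f v))\<^sup>2)"
      unfolding Em2_def by (rule sum_swap3[symmetric])
    also have "\<dots> \<le> (\<Sum>u\<in>V. \<Sum>v\<in>V. W u v * (f u - f v)\<^sup>2)"
    proof (intro sum_mono)
      fix u v assume uv: "u \<in> V" "v \<in> V"
      have "(\<Sum>m<n. (clip (c m) (dd m) (f u) - clip (c m) (dd m) (f v))\<^sup>2) \<le> (f u - f v)\<^sup>2"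
        by (rule window_sq[of c dd, OF cd dc])
      then show "(\<Sum>m<n. W u v * (clip (c m) (dd m) (f u) - clip (c m) (dd m) (f v))\<^sup>2) \<le> W u v * (f u - f v)\<^sup>2"
        using Wnn[OF uv] by (simp add: sum_distrib_left[symmetric] mult_left_mono)
    qed
    finally show ?thesis unfolding Num_def .
  qed
  have S1: "(\<Sum>m\<in>Bad. dd m * lam m * vol V W (Plat m)) \<le> (\<Sum>m<n. 8 * \<kappa> * (Qn m / 2))"
  proof -
    have "(\<Sum>m\<in>Bad. dd m * lam m * vol V W (Plat m)) \<le> (\<Sum>m\<in>Bad. 8 * \<kappa> * (Qn m / 2))"
      using dBad by (intro sum_mono) auto
    also have "\<dots> \<le> (\<Sum>m<n. 8 * \<kappa> * (Qn m / 2))"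
      using Badn kpos Qnnn by (intro sum_mono2) auto
    finally show ?thesis .
  qed
  have S2: "(\<Sum>m\<in>Bad. dd m / lam m * Em2 m) \<le> (\<Sum>m<n. 8 * \<kappa> * Em2 m)"
  proof -
    have "(\<Sum>m\<in>Bad. dd m / lam m * Em2 m) \<le> (\<Sum>m\<in>Bad. 8 * \<kappa> * Em2 m)"
      using dBad by (intro sum_mono) auto
    also have "\<dots> \<le> (\<Sum>m<n. 8 * \<kappa> * Em2 m)"
      using Badn kpos Em2nn by (intro sum_mono2) auto
    finally show ?thesis .
  qed
  have S1': "(\<Sum>m<n. 8 * \<kappa> * (Qn m / 2)) \<le> 4 * \<kappa> * Num"
  proof -
    have "(\<Sum>m<n. 8 * \<kappa> * (Qn m / 2)) = (\<Sum>m<n. 4 * \<kappa> * Qn m)" by (rule sum.cong) auto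
    also have "\<dots> = 4 * \<kappa> * (\<Sum>m<n. Qn m)" by (simp add: sum_distrib_left)
    also have "\<dots> \<le> 4 * \<kappa> * Num" using QnSum kpos by (intro mult_left_mono) auto
    finally show ?thesis .
  qed
  have S2': "(\<Sum>m<n. 8 * \<kappa> * Em2 m) \<le> 8 * \<kappa> * Num"
  proof -
    have "(\<Sum>m<n. 8 * \<kappa> * Em2 m) = 8 * \<kappa> * (\<Sum>m<n. Em2 m)" by (simp add: sum_distrib_left)
    also have "\<dots> \<le> 8 * \<kappa> * Num" using Em2Sum kpos by (intro mult_left_mono) auto
    finally show ?thesis .
  qed
  have main: "\<phi> * (exp (-30) * N) \<le> (2 * (K + 1) + 12 * \<kappa>) * Num"
  proof -
    have "\<phi> * (exp (-30) * N) \<le> \<phi> * (\<Sum>v\<in>V. wdeg V W v * F (f v))"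
      using LB phipos by (intro mult_left_mono) auto
    also have "\<dots> \<le> D" by (rule CA)
    finally show ?thesis using Dle S1 S2 S1' S2' by (simp add: algebra_simps)
  qed
  have "\<phi> * exp (-30) \<le> (2 * (K + 1) + 12 * \<kappa>) * (2 * R)"
  proof -
    have "(\<phi> * exp (-30)) * N \<le> ((2 * (K + 1) + 12 * \<kappa>) * (2 * R)) * N"
      using main unfolding Num_eq by (simp add: algebra_simps)
    then show ?thesis using Npos by simp
  qed
  moreover have "\<kappa> * R = \<phi> * exp (-30) / 48"
    unfolding \<kappa>_def s0_def using Rpos by (simp add: exp_minus field_simps)
  ultimately have "\<phi> * exp (-30) \<le> 4 * (K + 1) * R + \<phi> * exp (-30) / 2"
    by (simp add: algebra_simps)
  then have "\<phi> * exp (-30) \<le> 8 * (K + 1) * R" by linarith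
  also have "\<dots> \<le> 16 * K * R" using K1 Rpos by simp
  finally have "\<phi> * exp (-30) * exp 30 \<le> 16 * K * R * exp 30" by (simp add: mult_right_mono)
  then show ?thesis unfolding K_def by (simp add: exp_minus mult.commute mult.left_commute)
qed

lemma bump_nz: "bump A B h x \<noteq> 0 \<Longrightarrow> A < x \<and> x < B"
  unfolding bump_def by (auto simp: min_def max_def split: if_splits)

lemma core:
  fixes V :: "nat set" and W :: "nat \<Rightarrow> nat \<Rightarrow> real" and k :: nat and f :: "nat \<Rightarrow> real"
  assumes g: "wgraph V W" and k1: "k \<ge> 1" and f0: "\<forall>v\<in>V. f v \<ge> 0"
    and half: "vol V W (supp V f) \<le> vol V W V / 2" and Rpos: "rayleigh V W f > 0"
  shows "let \<delta> = (fconductance V W f)\<^sup>2 / rayleigh V W f in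
        fconductance V W f \<le> (48 * exp 30)\<^sup>2 * real k * rayleigh V W f \<or>
        (\<exists>fs :: nat \<Rightarrow> nat \<Rightarrow> real.
           (\<forall>i<k. \<forall>j<k. i \<noteq> j \<longrightarrow> supp V (fs i) \<inter> supp V (fs j) = {}) \<and>
           (\<forall>i<k. supp V (fs i) \<noteq> {} \<and> supp V (fs i) \<subseteq> supp V f \<and>
              rayleigh V W (fs i) \<le> (48 * exp 30)\<^sup>2 * (real k)\<^sup>2 * rayleigh V W f / \<delta> \<and>
              (\<exists>a b :: real. 0 < a \<and> a < b \<and>
                 1 * a / real k \<le> b - a \<and> b - a \<le> 31 * a / real k \<and>
                 supp V (fs i) \<subseteq> {v\<in>V. a \<le> f v \<and> f v \<le> b})))"
proof -
  define \<phi> where "\<phi> = fconductance V W f"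
  define R where "R = rayleigh V W f"
  define s0 where "s0 = (48 * exp 30 :: real)"
  define C where "C = s0\<^sup>2"
  define \<beta> where "\<beta> = s0\<^sup>2 * (real k)\<^sup>2 * R / (\<phi>\<^sup>2 / R)"
  have fin: "finite V" using g unfolding wgraph_def by auto
  have K1: "real k \<ge> 1" using k1 by simp
  have X: "\<phi> \<le> C * real k * R \<or>
        (\<exists>fs :: nat \<Rightarrow> nat \<Rightarrow> real.
           (\<forall>i<k. \<forall>j<k. i \<noteq> j \<longrightarrow> supp V (fs i) \<inter> supp V (fs j) = {}) \<and>
           (\<forall>i<k. supp V (fs i) \<noteq> {} \<and> supp V (fs i) \<subseteq> supp V f \<and>
              rayleigh V W (fs i) \<le> \<beta> \<and>
              (\<exists>a b :: real. 0 < a \<and> a < b \<and>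
                 1 * a / real k \<le> b - a \<and> b - a \<le> 31 * a / real k \<and>
                 supp V (fs i) \<subseteq> {v\<in>V. a \<le> f v \<and> f v \<le> b})))"
  proof (cases "\<phi> \<le> C * real k * R")
    case True then show ?thesis by simp
  next
    case False
    have Rp: "R > 0" using Rpos unfolding R_def .
    have Cpos: "C > 0" unfolding C_def s0_def by simp
    have phipos: "\<phi> > 0" using False Cpos Rp K1 by (smt (verit) mult_pos_pos of_nat_0_less_iff)
    have dnn: "\<And>v. v \<in> V \<Longrightarrow> wdeg V W v \<ge> 0" using wdeg_ge1[OF g] by (meson order_trans zero_le_one)
    have suppne: "supp V f \<noteq> {}"
    proof
      assume "supp V f = {}"
      then have "\<forall>v\<in>V. f v = 0" unfolding supp_def by auto
      then have "wnorm2 V W f = 0" unfolding wnorm2_def by simp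
      then show False using Rp unfolding R_def rayleigh_def by simp
    qed
    define mpos where "mpos = Min (f ` supp V f)"
    have finS: "finite (supp V f)" using fin unfolding supp_def by simp
    have mpos_in: "mpos \<in> f ` supp V f" unfolding mpos_def using finS suppne by simp
    have mpos_pos: "mpos > 0" using mpos_in f0 unfolding supp_def by force
    have mpos_le: "\<forall>v\<in>V. f v > 0 \<longrightarrow> mpos \<le> f v" unfolding mpos_def supp_def using finS
      by (auto intro!: Min_le simp: supp_def)
    define Mx where "Mx = Max (f ` V)"
    have Vne: "V \<noteq> {}" using suppne unfolding supp_def by auto
    have Mx_ge: "\<forall>v\<in>V. f v \<le> Mx" unfolding Mx_def using fin by simp
    define r where "r = 1 + 1 / real k"
    have r1: "r > 1" unfolding r_def using K1 by simp
    define a0 where "a0 = mpos / r ^ (10 * k)"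
    have a0pos: "a0 > 0" unfolding a0_def using mpos_pos r1 by simp
    define a where "a = (\<lambda>i. a0 * r ^ i)"
    have a10: "a (10 * k) = mpos" unfolding a_def a0_def using r1 by simp
    have amono: "\<And>i j. i \<le> j \<Longrightarrow> a i \<le> a j" unfolding a_def using r1 a0pos by (simp add: power_increasing)
    have apos: "\<And>i. a i > 0" unfolding a_def using r1 a0pos by simp
    obtain n where n: "Mx / a0 < (r ^ 5) ^ n" using real_arch_pow[of "r ^ 5" "Mx / a0"] r1 by auto
    have top: "\<forall>v\<in>V. f v < a (5 * n)"
    proof
      fix v assume "v \<in> V"
      then have "f v \<le> Mx" using Mx_ge by simp
      also have "Mx < a0 * (r ^ 5) ^ n" using n a0pos by (simp add: pos_divide_less_eq mult.commute)
      finally show "f v < a (5 * n)" unfolding a_def by (simp add: power_mult)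
    qed
    define gq where "gq = (\<lambda>m v. bump (a (5*m)) (a (5*m+5)) (a (5*m) / real k) (f v))"
    define G where "G = {m\<in>{..<n}. supp V (gq m) \<noteq> {} \<and> rayleigh V W (gq m) \<le> \<beta>}"
    have Gsub: "G \<subseteq> {..<n}" unfolding G_def by auto
    have finG: "finite G" using Gsub finite_subset by blast
    have cardG: "card G \<ge> k"
    proof (rule ccontr)
      assume "\<not> k \<le> card G"
      then have cG: "card G < k" by simp
      have bad: "\<forall>m<n. m \<notin> G \<longrightarrow>
          \<beta> * wnorm2 V W (gq m) \<le> (\<Sum>u\<in>V. \<Sum>v\<in>V. W u v * (gq m u - gq m v)\<^sup>2) / 2"
      proof (intro allI impI)
        fix m assume mn: "m < n" and mG: "m \<notin> G"
        have Qnn: "0 \<le> (\<Sum>u\<in>V. \<Sum>v\<in>V. W u v * (gq m u - gq m v)\<^sup>2)"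
          using g unfolding wgraph_def by (intro sum_nonneg mult_nonneg_nonneg) auto
        show "\<beta> * wnorm2 V W (gq m) \<le> (\<Sum>u\<in>V. \<Sum>v\<in>V. W u v * (gq m u - gq m v)\<^sup>2) / 2"
        proof (cases "supp V (gq m) = {}")
          case True
          then have "\<forall>v\<in>V. gq m v = 0" unfolding supp_def by auto
          then have "wnorm2 V W (gq m) = 0" unfolding wnorm2_def by simp
          then show ?thesis using Qnn by simp
        next
          case False
          then have rb: "rayleigh V W (gq m) > \<beta>" using mG mn unfolding G_def by auto
          obtain v where v: "v \<in> V" "gq m v \<noteq> 0" using False unfolding supp_def by auto
          have "0 < wdeg V W v * (gq m v)\<^sup>2" using wdeg_ge1[OF g v(1)] v(2) by simp
          also have "\<dots> \<le> wnorm2 V W (gq m)" unfolding wnorm2_def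
            using fin v(1) dnn by (intro member_le_sum) auto
          finally have Np: "wnorm2 V W (gq m) > 0" .
          then show ?thesis using rb unfolding rayleigh_def by (simp add: field_simps)
        qed
      qed
      have low': "\<forall>v\<in>V. 0 < f v \<longrightarrow> a0 * (1 + 1 / real k) ^ (10 * k) \<le> f v"
        using mpos_le a10 unfolding a_def r_def by simp
      have top': "\<forall>v\<in>V. f v < a0 * (1 + 1 / real k) ^ (5 * n)" using top unfolding a_def r_def .
      have phipos': "0 < fconductance V W f" using phipos unfolding \<phi>_def .
      note bad' = bad[unfolded gq_def a_def r_def \<beta>_def s0_def \<phi>_def R_def]
      have "\<phi> \<le> 16 * exp 30 * real k * R"
        unfolding \<phi>_def R_def by (rule few_good[OF g k1 f0 half Rpos a0pos low' top' Gsub cG phipos' bad'])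
      moreover have "16 * exp 30 \<le> C"
      proof -
        have e1: "exp 30 \<ge> (1::real)" by simp
        then have "16 * 1 \<le> 2304 * exp (30::real)" by linarith
        then have "16 * exp 30 \<le> 2304 * exp 30 * exp (30::real)"
          using mult_right_mono[of "16::real" "2304 * exp 30" "exp 30"] by simp
        then show ?thesis unfolding C_def s0_def by (simp add: power2_eq_square)
      qed
      ultimately have "\<phi> \<le> C * real k * R" using K1 Rp
        by (smt (verit) mult_right_mono of_nat_0_le_iff mult_nonneg_nonneg)
      then show False using False by simp
    qed
    define L where "L = sorted_list_of_set G"
    have Lset: "set L = G" and Ldist: "distinct L" and Llen: "length L = card G"
      unfolding L_def using finG by auto
    define fs where "fs = (\<lambda>i. gq (L ! i))"
    have LG: "L ! i \<in> G" if "i < k" for i using that cardG Llen Lset by (metis nth_mem order_less_le_trans)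
    have suppI: "supp V (gq m) \<subseteq> {v\<in>V. a (5*m) < f v \<and> f v < a (5*m+5)}" for m
      unfolding supp_def gq_def using bump_nz by blast
    have disj: "supp V (gq m) \<inter> supp V (gq m') = {}" if "m \<noteq> m'" for m m'
    proof -
      have key: "supp V (gq m) \<inter> supp V (gq m') = {}" if "m < m'" for m m'
      proof -
        have "a (5*m+5) \<le> a (5*m')" using that amono by simp
        then show ?thesis using suppI[of m] suppI[of m'] by fastforce
      qed
      show ?thesis using that key[of m m'] key[of m' m] by (cases "m < m'") (auto simp: Int_commute)
    qed
    show ?thesis
    proof (rule disjI2, rule exI[of _ fs], intro conjI allI impI)
      fix i j assume ij: "i < k" "j < k" "i \<noteq> j"
      have "L ! i \<noteq> L ! j" using ij Ldist Llen cardG by (simp add: nth_eq_iff_index_eq)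
      then show "supp V (fs i) \<inter> supp V (fs j) = {}" unfolding fs_def by (rule disj)
    next
      fix i assume i: "i < k"
      define m where "m = L ! i"
      have mG: "m \<in> G" unfolding m_def using LG[OF i] .
      show "supp V (fs i) \<noteq> {}" using mG unfolding fs_def m_def[symmetric] G_def by auto
      show "rayleigh V W (fs i) \<le> \<beta>" using mG unfolding fs_def m_def[symmetric] G_def by auto
      show "supp V (fs i) \<subseteq> supp V f"
        using suppI[of m] apos[of "5*m"] unfolding fs_def m_def[symmetric] supp_def by fastforce
      show "\<exists>a' b. 0 < a' \<and> a' < b \<and> 1 * a' / real k \<le> b - a' \<and> b - a' \<le> 31 * a' / real k \<and>
                 supp V (fs i) \<subseteq> {v\<in>V. a' \<le> f v \<and> f v \<le> b}"
      proof (intro exI conjI)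
        show "0 < a (5*m)" by (rule apos)
        have eq: "a (5*m+5) - a (5*m) = a (5*m) * ((1 + 1 / real k) ^ 5 - 1)"
          unfolding a_def r_def by (simp add: power_add algebra_simps)
        have x: "0 \<le> 1 / real k" "1 / real k \<le> 1" using K1 by auto
        note pb = pow5_bounds[OF x]
        show "a (5*m) < a (5*m+5)" using eq pb apos[of "5*m"] K1
          by (smt (verit) divide_pos_pos mult_pos_pos of_nat_0_less_iff)
        show "1 * a (5*m) / real k \<le> a (5*m+5) - a (5*m)" unfolding eq
          using mult_left_mono[OF pb(1), of "a (5*m)"] apos[of "5*m"] by simp
        show "a (5*m+5) - a (5*m) \<le> 31 * a (5*m) / real k" unfolding eq
          using mult_left_mono[OF pb(2), of "a (5*m)"] apos[of "5*m"] by (simp add: mult.commute)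
        show "supp V (fs i) \<subseteq> {v\<in>V. a (5*m) \<le> f v \<and> f v \<le> a (5*m+5)}"
          using suppI[of m] unfolding fs_def m_def[symmetric] by fastforce
      qed
    qed
  qed
  show ?thesis unfolding Let_def using X unfolding \<phi>_def R_def C_def \<beta>_def s0_def .
qed

theorem mainTheorem9:
  shows "\<exists>C c1 c2 :: real. C > 0 \<and> c1 > 0 \<and> c2 > 0 \<and>
    (\<forall>(V :: nat set) W (k :: nat) (f :: nat \<Rightarrow> real).
      wgraph V W \<longrightarrow> k \<ge> 1 \<longrightarrow> (\<forall>v\<in>V. f v \<ge> 0) \<longrightarrow>
      vol V W (supp V f) \<le> vol V W V / 2 \<longrightarrow> rayleigh V W f > 0 \<longrightarrow>
      (let \<delta> = (fconductance V W f)\<^sup>2 / rayleigh V W f in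
        fconductance V W f \<le> C * real k * rayleigh V W f \<or>
        (\<exists>fs :: nat \<Rightarrow> nat \<Rightarrow> real.
           (\<forall>i<k. \<forall>j<k. i \<noteq> j \<longrightarrow> supp V (fs i) \<inter> supp V (fs j) = {}) \<and>
           (\<forall>i<k. supp V (fs i) \<noteq> {} \<and> supp V (fs i) \<subseteq> supp V f \<and>
              rayleigh V W (fs i) \<le> C * (real k)\<^sup>2 * rayleigh V W f / \<delta> \<and>
              (\<exists>a b :: real. 0 < a \<and> a < b \<and>
                 c1 * a / real k \<le> b - a \<and> b - a \<le> c2 * a / real k \<and>
                 supp V (fs i) \<subseteq> {v\<in>V. a \<le> f v \<and> f v \<le> b})))))"
  apply (rule exI[of _ "(48 * exp 30)\<^sup>2"], rule exI[of _ "1::real"], rule exI[of _ "31::real"])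
  apply (intro conjI)
     apply simp
    apply simp
   apply simp
  apply (intro allI impI)
  apply (rule core)
      apply assumption+
  done

end
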